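(* Let $X,Y$ be strings over a binary alphabet, $\ell\ge1$, and $\mathcal{S}(\ell)$ an $\ell$-cover. Let $\mathcal{F}$ be the set of all strings occurring as a component of some pair in $\mathsf{Pairs}_\ell(X)\cup\mathsf{Pairs}_\ell(Y)$, and let $N_0(F),N_1(F)$ ($F\in\mathcal{F}$) be defined from a marking of light edges of $\mathcal{T}(\mathcal{F})$ in which every node has at most one outgoing non-light edge, as follows: $N_0(F)=\{F\}$ and $N_1(F)$ consists of $F$ and every string obtained from $F$ by choosing a light edge $(u,w)$ on the root-to-terminal path of $F$ and replacing $F[|u|+1]$ ($|u|$ the string depth of $u$) by the other letter. For $S\in\{X,Y\}$ and $d\in\{0,1\}$ let $$\mathsf{Pairs}^{(d)}_\ell(S)=\bigcup_{(U_1,U_2)\in\mathsf{Pairs}_\ell(S)}\ \bigcup_{d_1+d_2=d}\{(U_1',U_2') : U_1'\in N_{d_1}(U_1),\ U_2'\in N_{d_2}(U_2)\}.$$ If $\mathsf{LCF}_1(X,Y)\ge\ell$, then $$\mathsf{LCF}_1(X,Y)=\max_{k_1+k_2=1}\mathrm{maxPairLCP}(\mathsf{Pairs}^{(k_1)}_\ell(X),\mathsf{Pairs}^{(k_2)}_\ell(Y)).$$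
   Context: $U[i..j]$ denotes a factor, $U^R$ the reversal, $d_H$ the Hamming distance; $\mathsf{LCP}$ is the longest common prefix length; $\mathsf{LCP}_d(U,V)=\max\{p\le\min(|U|,|V|): d_H(U[1..p],V[1..p])\le d\}$. $\mathsf{LCF}_k(X,Y)$ is the maximum length of a factor of $X$ and a factor of $Y$ of equal length at Hamming distance at most $k$. A $d$-cover is a set $\mathcal{S}(d)\subseteq\mathbb{Z}_+$ with a function $h$, $0\le h(i,j)<d$, such that $i+h(i,j),j+h(i,j)\in\mathcal{S}(d)$ for all $i,j\in\mathbb{Z}_+$. $\mathsf{Pairs}_\ell(U)=\{((U[1..i-1])^R,U[i..|U|]) : i\in\mathcal{S}(\ell)\cap[1..|U|]\}$. $\mathrm{maxPairLCP}(\mathcal{P},\mathcal{Q})=\max\{\mathsf{LCP}(P_1,Q_1)+\mathsf{LCP}(P_2,Q_2):(P_1,P_2)\in\mathcal{P},(Q_1,Q_2)\in\mathcal{Q}\}$. $\mathcal{T}(\mathcal{F})$ is the compacted trie of $\mathcal{F}$ (root, branching and terminal nodes of the trie), string depth of a node = length of the string it represents. *)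

theory Defs
  imports Main "HOL-Library.Sublist"
begin

(* Strings are lists; positions in the paper are 1-based, list indices are 0-based. *)

definition hamming :: "'a list \<Rightarrow> 'a list \<Rightarrow> nat" where
  "hamming U V = card {i. i < min (length U) (length V) \<and> U ! i \<noteq> V ! i}"

definition LCP :: "'a list \<Rightarrow> 'a list \<Rightarrow> nat" where
  "LCP U V = length (longest_common_prefix U V)"

definition LCF :: "nat \<Rightarrow> 'a list \<Rightarrow> 'a list \<Rightarrow> nat" where
  "LCF k X Y = Max {m. \<exists>i j. i + m \<le> length X \<and> j + m \<le> length Y \<and>
      hamming (take m (drop i X)) (take m (drop j Y)) \<le> k}"

definition is_cover :: "nat \<Rightarrow> nat set \<Rightarrow> bool" where
  "is_cover d S \<longleftrightarrow> S \<subseteq> {1..} \<and>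
     (\<exists>h :: nat \<Rightarrow> nat \<Rightarrow> nat. \<forall>i\<ge>1. \<forall>j\<ge>1. h i j < d \<and> i + h i j \<in> S \<and> j + h i j \<in> S)"

definition Pairs :: "nat set \<Rightarrow> 'a list \<Rightarrow> ('a list \<times> 'a list) set" where
  "Pairs S U = {(rev (take (i - 1) U), drop (i - 1) U) | i. i \<in> S \<and> 1 \<le> i \<and> i \<le> length U}"

definition maxPairLCP :: "('a list \<times> 'a list) set \<Rightarrow> ('a list \<times> 'a list) set \<Rightarrow> nat" where
  "maxPairLCP P Q = Max {LCP P1 Q1 + LCP P2 Q2 | P1 P2 Q1 Q2. (P1, P2) \<in> P \<and> (Q1, Q2) \<in> Q}"

definition comps :: "('a list \<times> 'a list) set \<Rightarrow> 'a list set" where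
  "comps P = fst ` P \<union> snd ` P"

(* Nodes of the compacted trie T(F): root, branching nodes, terminal nodes
   (a node is identified with the string it represents; its string depth is its length) *)
definition trie_nodes :: "'a list set \<Rightarrow> 'a list set" where
  "trie_nodes F = {[]} \<union> F \<union>
     {u. \<exists>a b. a \<noteq> b \<and> (\<exists>x\<in>F. prefix (u @ [a]) x) \<and> (\<exists>y\<in>F. prefix (u @ [b]) y)}"

definition trie_edge :: "'a list set \<Rightarrow> 'a list \<Rightarrow> 'a list \<Rightarrow> bool" where
  "trie_edge F u w \<longleftrightarrow> u \<in> trie_nodes F \<and> w \<in> trie_nodes F \<and> strict_prefix u w \<and>
     \<not> (\<exists>v\<in>trie_nodes F. strict_prefix u v \<and> strict_prefix v w)"

definition valid_light :: "'a list set \<Rightarrow> ('a list \<times> 'a list) set \<Rightarrow> bool" where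
  "valid_light F L \<longleftrightarrow> (\<forall>(u, w)\<in>L. trie_edge F u w) \<and>
     (\<forall>u w w'. trie_edge F u w \<longrightarrow> trie_edge F u w' \<longrightarrow> (u, w) \<notin> L \<longrightarrow> (u, w') \<notin> L \<longrightarrow> w = w')"

definition N1 :: "(bool list \<times> bool list) set \<Rightarrow> bool list \<Rightarrow> bool list set" where
  "N1 L F = {F} \<union> {F[length u := \<not> F ! length u] | u w. (u, w) \<in> L \<and> prefix w F}"

definition Nbr :: "(bool list \<times> bool list) set \<Rightarrow> nat \<Rightarrow> bool list \<Rightarrow> bool list set" where
  "Nbr L d F = (if d = 0 then {F} else N1 L F)"

definition PairsD :: "(bool list \<times> bool list) set \<Rightarrow> nat set \<Rightarrow> bool list \<Rightarrow> nat
     \<Rightarrow> (bool list \<times> bool list) set" where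
  "PairsD L S U d = (\<Union>(U1, U2)\<in>Pairs S U. \<Union>(d1, d2)\<in>{(d1, d2). d1 + d2 = d}.
      {(U1', U2'). U1' \<in> Nbr L d1 U1 \<and> U2' \<in> Nbr L d2 U2})"

end

theory Submission
  imports Defs
begin

lemma LCP_ge: "k \<le> LCP U V \<longleftrightarrow> k \<le> length U \<and> k \<le> length V \<and> (\<forall>i<k. U!i = V!i)"
  unfolding LCP_def
proof (induction U V arbitrary: k rule: longest_common_prefix.induct)
  case (1 x xs y ys)
  show ?case
  proof (cases k)
    case 0 then show ?thesis by simp
  next
    case (Suc k')
    then show ?thesis using 1[of k'] by (auto simp: nth_Cons' split: if_splits)
  qed
qed auto

lemma LCP_le: "LCP U V \<le> length U" "LCP U V \<le> length V" "i < LCP U V \<Longrightarrow> U!i = V!i"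
  using LCP_ge[of "LCP U V" U V] by auto

definition dc :: "'a list \<Rightarrow> 'a list \<Rightarrow> nat" where
  "dc F F' = card {k. k < length F \<and> F'!k \<noteq> F!k}"

lemma N1_dc: "F' \<in> N1 L F \<Longrightarrow> length F' = length F \<and> dc F F' \<le> 1"
proof -
  assume "F' \<in> N1 L F"
  then obtain j where j: "F' = F \<or> F' = F[j := \<not> F!j]" unfolding N1_def by auto
  have "{k. k < length F \<and> F'!k \<noteq> F!k} \<subseteq> {j}" using j by auto (metis nth_list_update_neq)+
  then have "card {k. k < length F \<and> F'!k \<noteq> F!k} \<le> card {j}" by (intro card_mono) auto
  then show ?thesis using j unfolding dc_def by auto
qed

lemma Nbr_dc: "F' \<in> Nbr L d F \<Longrightarrow> length F' = length F \<and> dc F F' \<le> d"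
  unfolding Nbr_def using N1_dc[of F' L F] by (auto simp: dc_def split: if_splits)

lemma hamming_eq:
  assumes "i + m \<le> length X" "j + m \<le> length Y"
  shows "hamming (take m (drop i X)) (take m (drop j Y)) = card {r. r < m \<and> X!(i+r) \<noteq> Y!(j+r)}"
proof -
  have "min (length (take m (drop i X))) (length (take m (drop j Y))) = m" using assms by simp
  moreover have "\<And>r. r < m \<Longrightarrow> take m (drop i X) ! r = X!(i+r) \<and> take m (drop j Y) ! r = Y!(j+r)"
    using assms by simp
  ultimately show ?thesis unfolding hamming_def by (metis (lifting))
qed

lemma prefix_nth': "prefix w P \<Longrightarrow> c < length w \<Longrightarrow> w ! c = P ! c"
  by (metis nth_append prefix_def)

lemma child:
  assumes "u \<in> trie_nodes F" "P \<in> F" "strict_prefix u P"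
  shows "\<exists>w. trie_edge F u w \<and> prefix w P"
proof -
  let ?Q = "\<lambda>v. v \<in> trie_nodes F \<and> strict_prefix u v \<and> prefix v P"
  have "?Q P" using assms by (auto simp: trie_nodes_def)
  from ex_has_least_nat[of ?Q P length, OF \<open>?Q P\<close>] obtain w where w: "?Q w" "\<forall>v. ?Q v \<longrightarrow> length w \<le> length v" by blast
  have "\<not> (\<exists>v\<in>trie_nodes F. strict_prefix u v \<and> strict_prefix v w)"
  proof
    assume "\<exists>v\<in>trie_nodes F. strict_prefix u v \<and> strict_prefix v w"
    then obtain v where v: "v \<in> trie_nodes F" "strict_prefix u v" "strict_prefix v w" by blast
    have "prefix v P" using v(3) w(1) by (meson prefix_order.trans strict_prefix_def)
    then have "length w \<le> length v" using w(2) v by blast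
    moreover have "length v < length w" using v(3) by (simp add: prefix_length_less)
    ultimately show False by simp
  qed
  then have "trie_edge F u w" unfolding trie_edge_def using w assms(1) by blast
  then show ?thesis using w by blast
qed

lemma flip:
  fixes P Q :: "bool list"
  assumes vl: "valid_light F L" and PF: "P \<in> F" and QF: "Q \<in> F"
    and hP: "h \<le> length P" and hQ: "h \<le> length Q"
    and card: "card {k. k<h \<and> P!k \<noteq> Q!k} \<le> 1"
  shows "(\<exists>P'\<in>N1 L P. h \<le> LCP P' Q) \<or> (\<exists>Q'\<in>N1 L Q. h \<le> LCP P Q')"
proof (cases "\<forall>k<h. P!k = Q!k")
  case True
  then have "h \<le> LCP P Q" using hP hQ LCP_ge by blast
  moreover have "P \<in> N1 L P" unfolding N1_def by simp
  ultimately show ?thesis by blast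
next
  case False
  then obtain c0 where "c0 < h \<and> P!c0 \<noteq> Q!c0" by blast
  from ex_has_least_nat[of "\<lambda>c. c < h \<and> P!c \<noteq> Q!c" c0 id, OF this]
  obtain c where c: "c < h" "P!c \<noteq> Q!c" and cmin: "\<forall>k. k < h \<and> P!k \<noteq> Q!k \<longrightarrow> c \<le> k" by auto
  have before: "\<forall>k<c. P!k = Q!k" using cmin c(1) by (meson leD less_trans)
  have others: "\<forall>k<h. k \<noteq> c \<longrightarrow> P!k = Q!k"
  proof (intro allI impI, rule ccontr)
    fix k assume k: "k < h" "k \<noteq> c" "P!k \<noteq> Q!k"
    have "{c, k} \<subseteq> {k. k<h \<and> P!k \<noteq> Q!k}" using k c by auto
    then have "card {c,k} \<le> card {k. k<h \<and> P!k \<noteq> Q!k}" by (intro card_mono) auto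
    then show False using card k(2) by simp
  qed
  have cP: "c < length P" and cQ: "c < length Q" using c hP hQ by auto
  define u where "u = take c P"
  have uQ: "take c Q = u" unfolding u_def using before cP cQ by (intro nth_equalityI) auto
  have lu: "length u = c" using cP u_def by simp
  have pP: "prefix (u @ [P!c]) P" unfolding u_def by (metis cP take_Suc_conv_app_nth take_is_prefix)
  have pQ: "prefix (u @ [Q!c]) Q" using uQ by (metis cQ take_Suc_conv_app_nth take_is_prefix)
  have un: "u \<in> trie_nodes F" unfolding trie_nodes_def using pP pQ c(2) PF QF by blast
  have "strict_prefix u (u@[P!c])" by (simp add: strict_prefix_def)
  then have sP: "strict_prefix u P" using pP prefix_order.less_le_trans by blast
  have "strict_prefix u (u@[Q!c])" by (simp add: strict_prefix_def)
  then have sQ: "strict_prefix u Q" using pQ prefix_order.less_le_trans by blast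
  obtain wP where wP: "trie_edge F u wP" "prefix wP P" using child[OF un PF sP] by blast
  obtain wQ where wQ: "trie_edge F u wQ" "prefix wQ Q" using child[OF un QF sQ] by blast
  have lwP: "c < length wP" using wP(1) lu unfolding trie_edge_def by (metis prefix_length_less)
  have lwQ: "c < length wQ" using wQ(1) lu unfolding trie_edge_def by (metis prefix_length_less)
  have "wP \<noteq> wQ" using prefix_nth'[OF wP(2) lwP] prefix_nth'[OF wQ(2) lwQ] c(2) by auto
  then have "(u, wP) \<in> L \<or> (u, wQ) \<in> L" using vl wP(1) wQ(1) unfolding valid_light_def by blast
  then show ?thesis
  proof
    assume L: "(u, wP) \<in> L"
    define P' where "P' = P[c := \<not> P!c]"
    have "P' \<in> N1 L P" unfolding N1_def P'_def using L wP(2) lu by blast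
    moreover have "h \<le> LCP P' Q" unfolding LCP_ge P'_def using hP hQ others c
      by (auto simp: nth_list_update)
    ultimately show ?thesis by blast
  next
    assume L: "(u, wQ) \<in> L"
    define Q' where "Q' = Q[c := \<not> Q!c]"
    have "Q' \<in> N1 L Q" unfolding N1_def Q'_def using L wQ(2) lu by blast
    moreover have "h \<le> LCP P Q'" unfolding LCP_ge Q'_def using hP hQ others c
      by (auto simp: nth_list_update)
    ultimately show ?thesis by blast
  qed
qed

lemma LCF_ge:
  assumes "i + m \<le> length X" "j + m \<le> length Y"
    and "card {r. r < m \<and> X!(i+r) \<noteq> Y!(j+r)} \<le> k"
  shows "m \<le> LCF k X Y"
proof -
  let ?A = "{m. \<exists>i j. i + m \<le> length X \<and> j + m \<le> length Y \<and>
      hamming (take m (drop i X)) (take m (drop j Y)) \<le> k}"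
  have "hamming (take m (drop i X)) (take m (drop j Y)) \<le> k" using assms hamming_eq[OF assms(1,2)] by simp
  then have "m \<in> ?A" using assms(1,2) by blast
  moreover have "finite ?A" by (rule finite_subset[of _ "{..length X}"]) auto
  ultimately show ?thesis unfolding LCF_def by (simp add: Max_ge)
qed

lemma upper:
  assumes a: "a \<le> length X" and b: "b \<le> length Y"
   and lens: "length P1' = a" "length Q1' = b" "length P2' = length X - a" "length Q2' = length Y - b"
   and dsum: "dc (rev (take a X)) P1' + dc (drop a X) P2' + dc (rev (take b Y)) Q1' + dc (drop b Y) Q2' \<le> 1"
  shows "LCP P1' Q1' + LCP P2' Q2' \<le> LCF 1 X Y"
proof -
  define s where "s = LCP P1' Q1'"
  define t where "t = LCP P2' Q2'"
  have sa: "s \<le> a" "s \<le> b" using LCP_le lens unfolding s_def by metis+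
  have ta: "t \<le> length X - a" "t \<le> length Y - b" using LCP_le lens unfolding t_def by metis+
  have seq: "\<And>k. k < s \<Longrightarrow> P1'!k = Q1'!k" unfolding s_def by (rule LCP_le(3))
  have teq: "\<And>k. k < t \<Longrightarrow> P2'!k = Q2'!k" unfolding t_def by (rule LCP_le(3))
  define D1 where "D1 = {k. k < length (rev (take a X)) \<and> P1'!k \<noteq> rev (take a X)!k}"
  define E1 where "E1 = {k. k < length (rev (take b Y)) \<and> Q1'!k \<noteq> rev (take b Y)!k}"
  define D2 where "D2 = {k. k < length (drop a X) \<and> P2'!k \<noteq> drop a X!k}"
  define E2 where "E2 = {k. k < length (drop b Y) \<and> Q2'!k \<noteq> drop b Y!k}"
  have fin: "finite D1" "finite E1" "finite D2" "finite E2" unfolding D1_def E1_def D2_def E2_def by auto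
  define M where "M = {r. r < s + t \<and> X!(a - s + r) \<noteq> Y!(b - s + r)}"
  have sub: "M \<subseteq> (\<lambda>k. s - 1 - k) ` (D1 \<union> E1) \<union> (\<lambda>k. k + s) ` (D2 \<union> E2)"
  proof
    fix r assume r: "r \<in> M"
    show "r \<in> (\<lambda>k. s - 1 - k) ` (D1 \<union> E1) \<union> (\<lambda>k. k + s) ` (D2 \<union> E2)"
    proof (cases "r < s")
      case True
      define k where "k = s - 1 - r"
      have k: "k < s" "r = s - 1 - k" using True unfolding k_def by auto
      have x: "rev (take a X) ! k = X!(a - s + r)" using k sa a by (simp add: rev_nth)
      have y: "rev (take b Y) ! k = Y!(b - s + r)" using k sa b by (simp add: rev_nth)
      have l1: "length (rev (take a X)) = a" "length (rev (take b Y)) = b" using a b by auto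
      have "k \<in> D1 \<union> E1" unfolding D1_def E1_def l1 using seq[OF k(1)] x y r k sa unfolding M_def by auto
      then show ?thesis using k(2) by blast
    next
      case False
      define k where "k = r - s"
      have k: "k < t" "r = k + s" using False r unfolding k_def M_def by auto
      have x: "drop a X ! k = X!(a - s + r)" using k sa ta a by simp
      have y: "drop b Y ! k = Y!(b - s + r)" using k sa ta b by simp
      have "k \<in> D2 \<union> E2" using teq[OF k(1)] x y r k ta unfolding M_def D2_def E2_def by auto
      then show ?thesis using k(2) by blast
    qed
  qed
  have "card M \<le> card ((\<lambda>k. s - 1 - k) ` (D1 \<union> E1) \<union> (\<lambda>k. k + s) ` (D2 \<union> E2))"
    using sub fin by (intro card_mono) auto
  also have "\<dots> \<le> card ((\<lambda>k. s - 1 - k) ` (D1 \<union> E1)) + card ((\<lambda>k. k + s) ` (D2 \<union> E2))"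
    by (rule card_Un_le)
  also have "\<dots> \<le> card (D1 \<union> E1) + card (D2 \<union> E2)"
    by (intro add_mono card_image_le) (use fin in auto)
  also have "\<dots> \<le> card D1 + card E1 + (card D2 + card E2)"
    by (intro add_mono card_Un_le)
  also have "\<dots> \<le> 1" using dsum unfolding dc_def D1_def E1_def D2_def E2_def by simp
  finally have cM: "card M \<le> 1" .
  have "s + t \<le> LCF 1 X Y"
    by (rule LCF_ge[of "a - s" _ _ "b - s"]) (use sa ta a b cM in \<open>auto simp: M_def\<close>)
  then show ?thesis unfolding s_def t_def .
qed

lemma PairsD_elem:
  assumes "(P1', P2') \<in> PairsD L S X d"
  shows "\<exists>a d1 d2. a < length X \<and> d1 + d2 = d \<and> length P1' = a \<and> length P2' = length X - a \<and>
     dc (rev (take a X)) P1' \<le> d1 \<and> dc (drop a X) P2' \<le> d2"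
proof -
  obtain i d1 d2 where i: "i \<in> S" "1 \<le> i" "i \<le> length X" "d1 + d2 = d"
    "P1' \<in> Nbr L d1 (rev (take (i - 1) X))" "P2' \<in> Nbr L d2 (drop (i - 1) X)"
    using assms unfolding PairsD_def Pairs_def by auto
  show ?thesis
    using Nbr_dc[OF i(5)] Nbr_dc[OF i(6)] i(2-4) by (intro exI[of _ "i - 1"] exI[of _ d1] exI[of _ d2]) auto
qed

lemma maxset_le:
  assumes "d + e = 1"
  shows "{LCP P1 Q1 + LCP P2 Q2 | P1 P2 Q1 Q2. (P1, P2) \<in> PairsD L S X d \<and> (Q1, Q2) \<in> PairsD L S Y e}
     \<subseteq> {..LCF 1 X Y}"
proof
  fix x assume "x \<in> {LCP P1 Q1 + LCP P2 Q2 | P1 P2 Q1 Q2. (P1, P2) \<in> PairsD L S X d \<and> (Q1, Q2) \<in> PairsD L S Y e}"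
  then obtain P1 P2 Q1 Q2 where x: "x = LCP P1 Q1 + LCP P2 Q2" "(P1, P2) \<in> PairsD L S X d" "(Q1, Q2) \<in> PairsD L S Y e"
    by blast
  obtain a d1 d2 where A: "a < length X" "d1 + d2 = d" "length P1 = a" "length P2 = length X - a"
     "dc (rev (take a X)) P1 \<le> d1" "dc (drop a X) P2 \<le> d2" using PairsD_elem[OF x(2)] by blast
  obtain b e1 e2 where B: "b < length Y" "e1 + e2 = e" "length Q1 = b" "length Q2 = length Y - b"
     "dc (rev (take b Y)) Q1 \<le> e1" "dc (drop b Y) Q2 \<le> e2" using PairsD_elem[OF x(3)] by blast
  have "x \<le> LCF 1 X Y" unfolding x(1)
    by (rule upper[of a X b Y]) (use A B assms in auto)
  then show "x \<in> {..LCF 1 X Y}" by simp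
qed

lemma PairsD_intro:
  "(U1, U2) \<in> Pairs S U \<Longrightarrow> d1 + d2 = d \<Longrightarrow> U1' \<in> Nbr L d1 U1 \<Longrightarrow> U2' \<in> Nbr L d2 U2
   \<Longrightarrow> (U1', U2') \<in> PairsD L S U d"
  unfolding PairsD_def by blast

lemma Nbr0 [simp]: "Nbr L 0 F = {F}" by (simp add: Nbr_def)
lemma Nbr1 [simp]: "Nbr L 1 F = N1 L F" by (simp add: Nbr_def)
lemma Nbr1' [simp]: "Nbr L (Suc 0) F = N1 L F" by (simp add: Nbr_def)
lemma self_N1 [simp]: "F \<in> N1 L F" by (simp add: N1_def)

lemma fin_max:
  fixes A B :: "nat set"
  assumes "A \<subseteq> {..m}" "B \<subseteq> {..m}" "A \<noteq> {}" "B \<noteq> {}" "\<exists>x\<in>A\<union>B. m \<le> x"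
  shows "max (Max A) (Max B) = m"
proof -
  have f: "finite A" "finite B" using assms(1,2) finite_subset by auto
  have "Max A \<le> m" "Max B \<le> m" using assms f by auto
  moreover obtain x where "x \<in> A \<union> B" "m \<le> x" using assms(5) by blast
  then have "m \<le> Max A \<or> m \<le> Max B" using f by (meson Max_ge UnE le_trans)
  ultimately show ?thesis by linarith
qed

theorem corollary6:
  fixes X Y :: "bool list" and l :: nat and S :: "nat set"
    and L :: "(bool list \<times> bool list) set"
  assumes "l \<ge> 1"
    and "is_cover l S"
    and "valid_light (comps (Pairs S X \<union> Pairs S Y)) L"
    and "LCF 1 X Y \<ge> l"
  shows "LCF 1 X Y = max (maxPairLCP (PairsD L S X 0) (PairsD L S Y 1))
                         (maxPairLCP (PairsD L S X 1) (PairsD L S Y 0))"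
proof -
  define m where "m = LCF 1 X Y"
  let ?A = "{m. \<exists>i j. i + m \<le> length X \<and> j + m \<le> length Y \<and>
      hamming (take m (drop i X)) (take m (drop j Y)) \<le> (1::nat)}"
  have finA: "finite ?A" by (rule finite_subset[of _ "{..length X}"]) auto
  have "0 \<in> ?A" by (auto simp: hamming_def)
  then have "m \<in> ?A" unfolding m_def LCF_def using finA Max_in by blast
  then obtain i j where ij: "i + m \<le> length X" "j + m \<le> length Y"
    "hamming (take m (drop i X)) (take m (drop j Y)) \<le> 1" by blast
  define M where "M = {r. r < m \<and> X!(i+r) \<noteq> Y!(j+r)}"
  have cM: "card M \<le> 1" using ij hamming_eq[OF ij(1,2)] unfolding M_def by simp
  have finM: "finite M" unfolding M_def by auto
  obtain H where H: "\<forall>i\<ge>1. \<forall>j\<ge>1. H i j < l \<and> i + H i j \<in> S \<and> j + H i j \<in> S"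
    using assms(2) unfolding is_cover_def by blast
  define h where "h = H (i+1) (j+1)"
  have hl: "h < l" "i + 1 + h \<in> S" "j + 1 + h \<in> S" using H[rule_format, of "i+1" "j+1"] unfolding h_def by auto
  have hm: "h < m" using hl assms(4) unfolding m_def by simp
  define a where "a = i + h"
  define b where "b = j + h"
  have aX: "a < length X" and bY: "b < length Y" using ij hm unfolding a_def b_def by auto
  define P1 where "P1 = rev (take a X)"
  define P2 where "P2 = drop a X"
  define Q1 where "Q1 = rev (take b Y)"
  define Q2 where "Q2 = drop b Y"
  have PX: "(P1, P2) \<in> Pairs S X" unfolding Pairs_def P1_def P2_def
    using hl(2) aX unfolding a_def by (intro CollectI exI[of _ "i + 1 + h"]) auto
  have QY: "(Q1, Q2) \<in> Pairs S Y" unfolding Pairs_def Q1_def Q2_def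
    using hl(3) bY unfolding b_def by (intro CollectI exI[of _ "j + 1 + h"]) auto
  define F where "F = comps (Pairs S X \<union> Pairs S Y)"
  have inF: "P1 \<in> F" "P2 \<in> F" "Q1 \<in> F" "Q2 \<in> F" using PX QY unfolding F_def comps_def by force+
  have vl: "valid_light F L" using assms(3) unfolding F_def .
  have lens: "length P1 = a" "length Q1 = b" "length P2 = length X - a" "length Q2 = length Y - b"
    using aX bY unfolding P1_def P2_def Q1_def Q2_def by auto
  have nth1: "\<And>k. k < h \<Longrightarrow> P1 ! k = X ! (i + (h - 1 - k)) \<and> Q1 ! k = Y ! (j + (h - 1 - k))"
    unfolding P1_def Q1_def a_def b_def using aX bY unfolding a_def b_def by (auto simp: rev_nth)
  have nth2: "\<And>k. k < m - h \<Longrightarrow> P2 ! k = X ! (i + (h + k)) \<and> Q2 ! k = Y ! (j + (h + k))"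
    unfolding P2_def Q2_def a_def b_def using aX bY ij unfolding a_def b_def by (auto simp: add.assoc)
  define A where "A = {LCP P1 Q1 + LCP P2 Q2 | P1 P2 Q1 Q2. (P1, P2) \<in> PairsD L S X 0 \<and> (Q1, Q2) \<in> PairsD L S Y 1}"
  define B where "B = {LCP P1 Q1 + LCP P2 Q2 | P1 P2 Q1 Q2. (P1, P2) \<in> PairsD L S X 1 \<and> (Q1, Q2) \<in> PairsD L S Y 0}"
  have X0: "(P1, P2) \<in> PairsD L S X 0" by (rule PairsD_intro[OF PX, of 0 0]) auto
  have X1: "(P1, P2) \<in> PairsD L S X 1" by (rule PairsD_intro[OF PX, of 0 1]) auto
  have Y0: "(Q1, Q2) \<in> PairsD L S Y 0" by (rule PairsD_intro[OF QY, of 0 0]) auto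
  have Y1: "(Q1, Q2) \<in> PairsD L S Y 1" by (rule PairsD_intro[OF QY, of 0 1]) auto
  have Ane: "A \<noteq> {}" unfolding A_def using X0 Y1 by blast
  have Bne: "B \<noteq> {}" unfolding B_def using X1 Y0 by blast
  have Asub: "A \<subseteq> {..m}" unfolding A_def m_def by (rule maxset_le) simp
  have Bsub: "B \<subseteq> {..m}" unfolding B_def m_def by (rule maxset_le) simp
  have split: "(\<forall>r<h. X!(i+r) = Y!(j+r)) \<or> (\<forall>r. h \<le> r \<and> r < m \<longrightarrow> X!(i+r) = Y!(j+r))"
  proof (rule ccontr)
    assume "\<not> ?thesis"
    then obtain r1 r2 where "r1 < h" "X!(i+r1) \<noteq> Y!(j+r1)" "h \<le> r2" "r2 < m" "X!(i+r2) \<noteq> Y!(j+r2)" by auto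
    then have "{r1, r2} \<subseteq> M" "r1 \<noteq> r2" using hm unfolding M_def by auto
    then have "card {r1, r2} \<le> card M" using finM by (intro card_mono) auto
    then show False using cM \<open>r1 \<noteq> r2\<close> by simp
  qed
  have "\<exists>x\<in>A\<union>B. m \<le> x"
    using split
  proof
    assume left: "\<forall>r<h. X!(i+r) = Y!(j+r)"
    have "\<forall>k<h. P1!k = Q1!k"
    proof (intro allI impI)
      fix k assume k: "k < h"
      have e: "X!(i+(h-1-k)) = Y!(j+(h-1-k))" using left[rule_format, of "h-1-k"] k by linarith
      show "P1!k = Q1!k" using nth1[OF k] e by metis
    qed
    then have L1: "h \<le> LCP P1 Q1" unfolding LCP_ge using lens hm ij unfolding a_def b_def by auto
    have "{k. k < m - h \<and> P2!k \<noteq> Q2!k} \<subseteq> (\<lambda>r. r - h) ` M"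
    proof
      fix k assume "k \<in> {k. k < m - h \<and> P2!k \<noteq> Q2!k}"
      then have "h + k \<in> M" "k = (h + k) - h" using nth2 unfolding M_def by auto
      then show "k \<in> (\<lambda>r. r - h) ` M" by blast
    qed
    then have "card {k. k < m - h \<and> P2!k \<noteq> Q2!k} \<le> card ((\<lambda>r. r - h) ` M)"
      using finM by (intro card_mono) auto
    also have "\<dots> \<le> card M" using finM by (rule card_image_le)
    finally have c2: "card {k. k < m - h \<and> P2!k \<noteq> Q2!k} \<le> 1" using cM by simp
    have "m - h \<le> length P2" "m - h \<le> length Q2" using lens ij unfolding a_def b_def by auto
    from flip[OF vl inF(2) inF(4) this c2]
    show ?thesis
    proof
      assume "\<exists>P'\<in>N1 L P2. m - h \<le> LCP P' Q2"
      then obtain P' where P': "P' \<in> N1 L P2" "m - h \<le> LCP P' Q2" by blast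
      have "(P1, P') \<in> PairsD L S X 1" by (rule PairsD_intro[OF PX, of 0 1]) (use P' in auto)
      then have "LCP P1 Q1 + LCP P' Q2 \<in> B" unfolding B_def using Y0 by blast
      moreover have "m \<le> LCP P1 Q1 + LCP P' Q2" using L1 P' hm by simp
      ultimately show ?thesis by blast
    next
      assume "\<exists>Q'\<in>N1 L Q2. m - h \<le> LCP P2 Q'"
      then obtain Q' where Q': "Q' \<in> N1 L Q2" "m - h \<le> LCP P2 Q'" by blast
      have "(Q1, Q') \<in> PairsD L S Y 1" by (rule PairsD_intro[OF QY, of 0 1]) (use Q' in auto)
      then have "LCP P1 Q1 + LCP P2 Q' \<in> A" unfolding A_def using X0 by blast
      moreover have "m \<le> LCP P1 Q1 + LCP P2 Q'" using L1 Q' hm by simp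
      ultimately show ?thesis by blast
    qed
  next
    assume right: "\<forall>r. h \<le> r \<and> r < m \<longrightarrow> X!(i+r) = Y!(j+r)"
    have "\<forall>k<m-h. P2!k = Q2!k"
    proof (intro allI impI)
      fix k assume k: "k < m - h"
      have e: "X!(i+(h+k)) = Y!(j+(h+k))" using right k by simp
      show "P2!k = Q2!k" using nth2[OF k] e by metis
    qed
    then have L2: "m - h \<le> LCP P2 Q2" unfolding LCP_ge using lens hm ij unfolding a_def b_def by auto
    have "{k. k < h \<and> P1!k \<noteq> Q1!k} \<subseteq> (\<lambda>r. h - 1 - r) ` M"
    proof
      fix k assume k: "k \<in> {k. k < h \<and> P1!k \<noteq> Q1!k}"
      then have "h - 1 - k \<in> M" "k = h - 1 - (h - 1 - k)" using nth1 hm unfolding M_def by auto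
      then show "k \<in> (\<lambda>r. h - 1 - r) ` M" by blast
    qed
    then have "card {k. k < h \<and> P1!k \<noteq> Q1!k} \<le> card ((\<lambda>r. h - 1 - r) ` M)"
      using finM by (intro card_mono) auto
    also have "\<dots> \<le> card M" using finM by (rule card_image_le)
    finally have c1: "card {k. k < h \<and> P1!k \<noteq> Q1!k} \<le> 1" using cM by simp
    have "h \<le> length P1" "h \<le> length Q1" using lens unfolding a_def b_def by auto
    from flip[OF vl inF(1) inF(3) this c1]
    show ?thesis
    proof
      assume "\<exists>P'\<in>N1 L P1. h \<le> LCP P' Q1"
      then obtain P' where P': "P' \<in> N1 L P1" "h \<le> LCP P' Q1" by blast
      have "(P', P2) \<in> PairsD L S X 1" by (rule PairsD_intro[OF PX, of 1 0]) (use P' in auto)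
      then have "LCP P' Q1 + LCP P2 Q2 \<in> B" unfolding B_def using Y0 by blast
      moreover have "m \<le> LCP P' Q1 + LCP P2 Q2" using L2 P' hm by simp
      ultimately show ?thesis by blast
    next
      assume "\<exists>Q'\<in>N1 L Q1. h \<le> LCP P1 Q'"
      then obtain Q' where Q': "Q' \<in> N1 L Q1" "h \<le> LCP P1 Q'" by blast
      have "(Q', Q2) \<in> PairsD L S Y 1" by (rule PairsD_intro[OF QY, of 1 0]) (use Q' in auto)
      then have "LCP P1 Q' + LCP P2 Q2 \<in> A" unfolding A_def using X0 by blast
      moreover have "m \<le> LCP P1 Q' + LCP P2 Q2" using L2 Q' hm by simp
      ultimately show ?thesis by blast
    qed
  qed
  then have "max (Max A) (Max B) = m" using fin_max[OF Asub Bsub Ane Bne] by blast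
  then show ?thesis unfolding maxPairLCP_def A_def B_def m_def by simp
qed

end
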